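(* Let $G$ be a Tanner graph whose smallest left (variable-node) degree $deg_l^-$ is at least 3, whose smallest right (check-node) degree $deg_r^-$ is at least 2, and whose girth $g$ satisfies $g>4$. Then $w^{BSC}_{\min}\ge (deg_l^- -1)^{\lceil g/4\rceil-1}$ and $w^{AWGN}_{\min}\ge (deg_l^- -1)^{\lceil g/4\rceil-1}$.
   Context: A Tanner graph $G$ is a finite bipartite graph with variable nodes $v_1,\dots,v_n$ and check nodes; its code consists of all $x\in\{0,1\}^n$ with every check node having an even number of neighbours $v_i$ with $x_i=1$. A degree-$\ell$ lift replaces each node by $\ell$ copies and each edge by a perfect matching between copy-sets; a lift-realizable pseudocodeword $p\in\mathbb{Z}_{\ge0}^n$ is obtained from a codeword of the code of a finite lift by letting $p_i$ be the number of copies of $v_i$ assigned 1. For nonzero $p$, with $e$ the smallest number such that the sum of the $e$ largest $p_i$ is at least $\frac12\sum_ip_i$, $w^{BSC}(p)=2e$ if equality holds and $2e-1$ otherwise; $w^{AWGN}(p)=(\sum_ip_i)^2/\sum_ip_i^2$. $w^{BSC}_{\min}$, $w^{AWGN}_{\min}$ are the minima of these weights over all nonzero lift-realizable pseudocodewords of $G$. *)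

theory Defs
  imports Complex_Main
begin

text \<open>A Tanner graph with variable nodes 0..<n, check nodes 0..<m, and
  edge relation E (E i j: variable i adjacent to check j); only pairs with
  i < n and j < m are considered edges.\<close>

definition tedge :: "nat \<Rightarrow> nat \<Rightarrow> (nat \<Rightarrow> nat \<Rightarrow> bool) \<Rightarrow> nat \<Rightarrow> nat \<Rightarrow> bool" where
  "tedge n m E i j \<longleftrightarrow> i < n \<and> j < m \<and> E i j"

definition var_deg :: "nat \<Rightarrow> nat \<Rightarrow> (nat \<Rightarrow> nat \<Rightarrow> bool) \<Rightarrow> nat \<Rightarrow> nat" where
  "var_deg n m E i = card {j. tedge n m E i j}"

definition chk_deg :: "nat \<Rightarrow> nat \<Rightarrow> (nat \<Rightarrow> nat \<Rightarrow> bool) \<Rightarrow> nat \<Rightarrow> nat" where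
  "chk_deg n m E j = card {i. tedge n m E i j}"

definition min_left_deg :: "nat \<Rightarrow> nat \<Rightarrow> (nat \<Rightarrow> nat \<Rightarrow> bool) \<Rightarrow> nat" where
  "min_left_deg n m E = Min (var_deg n m E ` {..<n})"

definition min_right_deg :: "nat \<Rightarrow> nat \<Rightarrow> (nat \<Rightarrow> nat \<Rightarrow> bool) \<Rightarrow> nat" where
  "min_right_deg n m E = Min (chk_deg n m E ` {..<m})"

text \<open>Vertices of the Tanner graph as a bipartite graph: Inl i = variable
  node i, Inr j = check node j.\<close>

fun tadj :: "nat \<Rightarrow> nat \<Rightarrow> (nat \<Rightarrow> nat \<Rightarrow> bool) \<Rightarrow> nat + nat \<Rightarrow> nat + nat \<Rightarrow> bool" where
  "tadj n m E (Inl i) (Inr j) = tedge n m E i j"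
| "tadj n m E (Inr j) (Inl i) = tedge n m E i j"
| "tadj n m E _ _ = False"

definition is_cycle :: "nat \<Rightarrow> nat \<Rightarrow> (nat \<Rightarrow> nat \<Rightarrow> bool) \<Rightarrow> (nat + nat) list \<Rightarrow> bool" where
  "is_cycle n m E vs \<longleftrightarrow> length vs \<ge> 3 \<and> distinct vs \<and>
     (\<forall>k < length vs. tadj n m E (vs ! k) (vs ! ((k + 1) mod length vs)))"

text \<open>Girth = length of a shortest cycle (convention: 0 if there is no cycle).\<close>

definition girth :: "nat \<Rightarrow> nat \<Rightarrow> (nat \<Rightarrow> nat \<Rightarrow> bool) \<Rightarrow> nat" where
  "girth n m E = Inf {length vs | vs. is_cycle n m E vs}"

text \<open>A degree-l lift is given by a
  permutation pi i j of the copies {..<l} for each edge (i,j): copy a of v_i is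
  joined to copy (pi i j a) of c_j. x i a says copy a of v_i is assigned 1.\<close>

definition lift_pcw :: "nat \<Rightarrow> nat \<Rightarrow> (nat \<Rightarrow> nat \<Rightarrow> bool) \<Rightarrow> (nat \<Rightarrow> nat) \<Rightarrow> bool" where
  "lift_pcw n m E p \<longleftrightarrow>
     (\<exists>(l::nat) (pi :: nat \<Rightarrow> nat \<Rightarrow> nat \<Rightarrow> nat) (x :: nat \<Rightarrow> nat \<Rightarrow> bool).
        0 < l \<and>
        (\<forall>i j. tedge n m E i j \<longrightarrow> bij_betw (pi i j) {..<l} {..<l}) \<and>
        (\<forall>j < m. \<forall>b < l. even (card {(i, a). i < n \<and> a < l \<and> tedge n m E i j \<and>
                                           pi i j a = b \<and> x i a})) \<and>
        (\<forall>i. p i = (if i < n then card {a. a < l \<and> x i a} else 0)))"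

definition nonzero_pcw :: "nat \<Rightarrow> (nat \<Rightarrow> nat) \<Rightarrow> bool" where
  "nonzero_pcw n p \<longleftrightarrow> (\<exists>i < n. p i \<noteq> 0)"

definition top_sum :: "nat \<Rightarrow> (nat \<Rightarrow> nat) \<Rightarrow> nat \<Rightarrow> nat" where
  "top_sum n p e = Max {sum p S | S. S \<subseteq> {..<n} \<and> card S = e}"

definition bsc_e :: "nat \<Rightarrow> (nat \<Rightarrow> nat) \<Rightarrow> nat" where
  "bsc_e n p = (LEAST e. e \<le> n \<and> 2 * top_sum n p e \<ge> sum p {..<n})"

definition w_bsc :: "nat \<Rightarrow> (nat \<Rightarrow> nat) \<Rightarrow> nat" where
  "w_bsc n p = (let e = bsc_e n p in
      if 2 * top_sum n p e = sum p {..<n} then 2 * e else 2 * e - 1)"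

definition w_awgn :: "nat \<Rightarrow> (nat \<Rightarrow> nat) \<Rightarrow> real" where
  "w_awgn n p = (real (sum p {..<n}))\<^sup>2 / real (\<Sum>i<n. (p i)\<^sup>2)"

end

theory Submission
  imports Defs
begin


lemma cyc_from_closed:
  fixes f :: "nat \<Rightarrow> 'v"
  assumes "f 0 = f L" "L \<ge> 1" "\<forall>s<L. R (f s) (f (s+1))"
    "\<forall>s. s+2 \<le> L \<longrightarrow> f s \<noteq> f (s+2)" "\<forall>x. \<not> R x x"
  shows "\<exists>vs. length vs \<ge> 3 \<and> distinct vs \<and> (\<forall>q<length vs. R (vs!q) (vs!((q+1) mod length vs))) \<and> length vs \<le> L"
proof -
  define P where "P = (\<lambda>D. \<exists>i. i + D \<le> L \<and> D > 0 \<and> f i = f (i+D))"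
  have PL: "P L" unfolding P_def using assms by auto
  define D where "D = (LEAST D. P D)"
  have PD: "P D" unfolding D_def using PL by (rule LeastI)
  have DL: "D \<le> L" unfolding D_def using PL by (rule Least_le)
  have minD: "\<And>D'. D' < D \<Longrightarrow> \<not> P D'" unfolding D_def using not_less_Least by blast
  obtain i where i: "i + D \<le> L" "D > 0" "f i = f (i+D)" using PD P_def by auto
  have D1: "D \<noteq> 1"
  proof
    assume "D = 1"
    then have "i < L" "f i = f (i+1)" using i by auto
    then show False using assms(3,5) by metis
  qed
  have D2: "D \<noteq> 2" using i assms(4) by auto
  have D3: "D \<ge> 3" using D1 D2 i(2) by linarith
  define vs where "vs = map (\<lambda>q. f (i+q)) [0..<D]"
  have len: "length vs = D" unfolding vs_def by simp
  have dist: "distinct vs"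
    unfolding vs_def distinct_conv_nth
  proof (intro allI impI)
    fix a b assume ab: "a < length (map (\<lambda>q. f (i + q)) [0..<D])" "b < length (map (\<lambda>q. f (i + q)) [0..<D])" "a \<noteq> b"
    show "map (\<lambda>q. f (i + q)) [0..<D] ! a \<noteq> map (\<lambda>q. f (i + q)) [0..<D] ! b"
    proof
      assume eq: "map (\<lambda>q. f (i + q)) [0..<D] ! a = map (\<lambda>q. f (i + q)) [0..<D] ! b"
      have "f (i+a) = f (i+b)" using eq ab by simp
      moreover have "a < D" "b < D" using ab by auto
      ultimately show False
      proof (cases "a < b")
        case True
        have "P (b - a)" unfolding P_def
          apply (rule exI[of _ "i+a"]) using True \<open>f (i+a) = f (i+b)\<close> \<open>b<D\<close> i by auto
        moreover have "b - a < D" using \<open>b<D\<close> True by linarith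
        ultimately show False using minD by blast
      next
        case False
        then have "b < a" using ab by linarith
        have "P (a - b)" unfolding P_def
          apply (rule exI[of _ "i+b"]) using \<open>b<a\<close> \<open>f (i+a) = f (i+b)\<close> \<open>a<D\<close> i by auto
        moreover have "a - b < D" using \<open>a<D\<close> \<open>b<a\<close> by linarith
        ultimately show False using minD by blast
      qed
    qed
  qed
  have adj: "\<forall>q<length vs. R (vs!q) (vs!((q+1) mod length vs))"
  proof (intro allI impI)
    fix q assume q: "q < length vs"
    show "R (vs!q) (vs!((q+1) mod length vs))"
    proof (cases "q + 1 < D")
      case True
      then show ?thesis using q len assms(3) i unfolding vs_def by auto
    next
      case False
      then have "q + 1 = D" using q len by simp
      then have "(q+1) mod length vs = 0" using len by simp
      moreover have "R (f (i+q)) (f (i+q+1))" using assms(3) i \<open>q+1 = D\<close> by auto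
      moreover have "vs ! q = f (i+q)" using q len unfolding vs_def by simp
      moreover have "vs ! 0 = f (i + q + 1)" using i D3 \<open>q+1=D\<close> unfolding vs_def by (simp add: add.assoc[symmetric]) (metis add_Suc_right)
      ultimately show ?thesis by simp
    qed
  qed
  show ?thesis using len dist adj D3 DL by blast
qed

lemma two_walks:
  fixes a b :: "nat \<Rightarrow> 'v"
  assumes sym: "\<forall>x y. R x y \<longrightarrow> R y x" and irr: "\<forall>x. \<not> R x x"
    and a0: "a 0 = b 0" and aL: "a L = b L" and s0: "s0 \<le> L" "a s0 \<noteq> b s0"
    and adja: "\<forall>s<L. R (a s) (a (s+1))" and adjb: "\<forall>s<L. R (b s) (b (s+1))"
    and nba: "\<forall>s. s+2 \<le> L \<longrightarrow> a s \<noteq> a (s+2)"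
    and nbb: "\<forall>s. s+2 \<le> L \<longrightarrow> b s \<noteq> b (s+2)"
  shows "\<exists>vs. length vs \<ge> 3 \<and> distinct vs \<and> (\<forall>q<length vs. R (vs!q) (vs!((q+1) mod length vs))) \<and> length vs \<le> 2*L"
proof -
  define j where "j = (LEAST s. s \<le> L \<and> a s \<noteq> b s)"
  have j: "j \<le> L" "a j \<noteq> b j" unfolding j_def using s0 by (metis (mono_tags, lifting) LeastI)+
  have jmin: "\<And>s. s < j \<Longrightarrow> a s = b s"
    using j unfolding j_def using not_less_Least by fastforce
  have j1: "j \<ge> 1" using j a0 by (cases j) auto
  have jL: "j < L" using j aL by (cases "j = L") auto
  define i where "i = (LEAST s. j < s \<and> s \<le> L \<and> a s = b s)"
  have i: "j < i" "i \<le> L" "a i = b i" unfolding i_def using jL aL by (metis (mono_tags, lifting) LeastI order.refl)+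
  have imin: "\<And>s. j \<le> s \<Longrightarrow> s < i \<Longrightarrow> a s \<noteq> b s"
  proof -
    fix s assume "j \<le> s" "s < i"
    show "a s \<noteq> b s"
    proof (cases "s = j")
      case True then show ?thesis using j by simp
    next
      case False
      then have "j < s" using \<open>j \<le> s\<close> by simp
      have "\<not> (j < s \<and> s \<le> L \<and> a s = b s)"
        using \<open>s < i\<close>[unfolded i_def] by (rule not_less_Least)
      then show ?thesis using \<open>j < s\<close> \<open>s < i\<close> i by auto
    qed
  qed
  define M where "M = i - j + 1"
  have M2: "M \<ge> 2" and jM: "j - 1 + M = i" using i j1 unfolding M_def by auto
  define f where "f = (\<lambda>s. if s \<le> M then a (j - 1 + s) else b (i + M - s))"
  have f0: "f 0 = f (2*M)"
  proof -
    have "f 0 = a (j - 1)" unfolding f_def by simp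
    also have "\<dots> = b (j - 1)" using jmin j1 by simp
    also have "\<dots> = f (2*M)"
    proof -
      have "i + M - 2*M = j - 1" using jM by linarith
      then show ?thesis unfolding f_def using M2 by simp
    qed
    finally show ?thesis .
  qed
  have fadj: "\<forall>s<2*M. R (f s) (f (s+1))"
  proof (intro allI impI)
    fix s assume s: "s < 2*M"
    consider "s < M" | "s = M" | "s > M" by linarith
    then show "R (f s) (f (s+1))"
    proof cases
      case 1
      then have "f s = a (j - 1 + s)" "f (s+1) = a (j - 1 + s + 1)" unfolding f_def by auto
      moreover have "j - 1 + s < L" using 1 jM i by linarith
      ultimately show ?thesis using adja by simp
    next
      case 2
      then have "f s = b i" "f (s+1) = b (i - 1)" unfolding f_def using i jM by auto
      moreover have "i - 1 < L" "i - 1 + 1 = i" using i by auto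
      ultimately show ?thesis using adjb sym by metis
    next
      case 3
      define t where "t = i + M - s - 1"
      have e1: "i + M - s = t + 1" "i + M - (s+1) = t" unfolding t_def using 3 s jM by linarith+
      have "f s = b (t+1)" "f (s+1) = b t" unfolding f_def using 3 e1 by auto
      moreover have "t < L" unfolding t_def using i s 3 jM by linarith
      ultimately show ?thesis using adjb sym by metis
    qed
  qed
  have fnb: "\<forall>s. s+2 \<le> 2*M \<longrightarrow> f s \<noteq> f (s+2)"
  proof (intro allI impI)
    fix s assume s: "s + 2 \<le> 2*M"
    consider "s + 2 \<le> M" | "s + 1 = M" | "s = M" | "s > M" by linarith
    then show "f s \<noteq> f (s+2)"
    proof cases
      case 1
      then have "f s = a (j - 1 + s)" "f (s+2) = a (j - 1 + s + 2)" unfolding f_def by auto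
      moreover have "j - 1 + s + 2 \<le> L" using 1 jM i by linarith
      ultimately show ?thesis using nba by simp
    next
      case 2
      then have "f s = a (i - 1)" "f (s+2) = b (i - 1)" unfolding f_def using jM M2 by auto
      moreover have "j \<le> i - 1" "i - 1 < i" using i by auto
      ultimately show ?thesis using imin by simp
    next
      case 3
      then have "f s = b i" "f (s+2) = b (i - 2)" unfolding f_def using i jM by auto
      moreover have "i - 2 + 2 \<le> L" "i - 2 + 2 = i" using i j1 by auto
      ultimately show ?thesis using nbb by metis
    next
      case 4
      define t where "t = i + M - s - 2"
      have e1: "i + M - s = t + 2" "i + M - (s+2) = t" unfolding t_def using 4 s jM by linarith+
      have "f s = b (t+2)" "f (s+2) = b t" unfolding f_def using 4 e1 by auto
      moreover have "t + 2 \<le> L" unfolding t_def using i s 4 jM by linarith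
      ultimately show ?thesis using nbb by metis
    qed
  qed
  obtain vs where vs: "length vs \<ge> 3" "distinct vs" "\<forall>q<length vs. R (vs!q) (vs!((q+1) mod length vs))" "length vs \<le> 2*M"
    using cyc_from_closed[of f "2*M" R] f0 fadj fnb irr M2 by auto
  have "2*M \<le> 2*L" using jM i j1 by linarith
  then show ?thesis using vs by (intro exI[of _ vs]) auto
qed



lemma local_ineq:
  assumes lp: "lift_pcw n m E p" and e: "tedge n m E v c"
  shows "p v \<le> sum p {u. tedge n m E u c \<and> u \<noteq> v}"
proof -
  obtain l :: nat and pq :: "nat \<Rightarrow> nat \<Rightarrow> nat \<Rightarrow> nat" and x :: "nat \<Rightarrow> nat \<Rightarrow> bool" where l: "0 < l"
    and bij: "\<forall>i j. tedge n m E i j \<longrightarrow> bij_betw (pq i j) {..<l} {..<l}"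
    and ev: "\<forall>j < m. \<forall>b < l. even (card {(i, a). i < n \<and> a < l \<and> tedge n m E i j \<and>
                                           pq i j a = b \<and> x i a})"
    and pdef: "\<forall>i. p i = (if i < n then card {a. a < l \<and> x i a} else 0)"
    using lp unfolding lift_pcw_def by (elim exE conjE) (rule that, assumption+)
  have vn: "v < n" and cm: "c < m" using e unfolding tedge_def by auto
  define U where "U = {u. tedge n m E u c \<and> u \<noteq> v}"
  define T where "T = Sigma U (\<lambda>u. {a'. a' < l \<and> x u a'})"
  define Xv where "Xv = {a. a < l \<and> x v a}"
  have finU: "finite U" unfolding U_def tedge_def by (rule finite_subset[of _ "{..<n}"]) auto
  have finT: "finite T" unfolding T_def using finU by auto
  have bv: "bij_betw (pq v c) {..<l} {..<l}" using bij e by simp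
  have injv: "inj_on (pq v c) {..<l}" using bv by (rule bij_betw_imp_inj_on)
  have mapv: "\<And>a. a < l \<Longrightarrow> pq v c a < l" using bij_betwE[OF bv] by simp
  have ex: "\<exists>y. y \<in> T \<and> pq (fst y) c (snd y) = pq v c a" if a: "a \<in> Xv" for a
  proof -
    define b where "b = pq v c a"
    have bl: "b < l" using a mapv unfolding Xv_def b_def by auto
    define K where "K = {(i, a). i < n \<and> a < l \<and> tedge n m E i c \<and> pq i c a = b \<and> x i a}"
    have evK: "even (card K)" using ev cm bl unfolding K_def by blast
    have vaK: "(v, a) \<in> K" using a vn e unfolding K_def Xv_def b_def by auto
    have finK: "finite K" unfolding K_def
      by (rule finite_subset[of _ "{..<n} \<times> {..<l}"]) auto
    have "K - {(v,a)} \<noteq> {}"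
    proof
      assume "K - {(v,a)} = {}"
      then have "K = {(v,a)}" using vaK by auto
      then show False using evK by simp
    qed
    then obtain u a' where ua: "(u,a') \<in> K" "(u,a') \<noteq> (v,a)" by auto
    have uv: "u \<noteq> v"
    proof
      assume "u = v"
      then have "pq v c a' = pq v c a" "a' < l" "a < l" using ua a unfolding K_def b_def Xv_def by auto
      then have "a' = a" using injv by (meson inj_onD lessThan_iff)
      then show False using ua \<open>u = v\<close> by simp
    qed
    have "(u,a') \<in> T" using ua uv unfolding K_def T_def U_def by auto
    moreover have "pq u c a' = pq v c a" using ua unfolding K_def b_def by auto
    ultimately show ?thesis by (intro exI[of _ "(u,a')"]) auto
  qed
  define g where "g = (\<lambda>a. SOME y. y \<in> T \<and> pq (fst y) c (snd y) = pq v c a)"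
  have g: "g a \<in> T \<and> pq (fst (g a)) c (snd (g a)) = pq v c a" if "a \<in> Xv" for a
    unfolding g_def using ex[OF that] by (rule someI_ex)
  have "inj_on g Xv"
  proof (rule inj_onI)
    fix a1 a2 assume a12: "a1 \<in> Xv" "a2 \<in> Xv" "g a1 = g a2"
    have "pq v c a1 = pq (fst (g a1)) c (snd (g a1))" using g[OF a12(1)] by simp
    also have "\<dots> = pq v c a2" using g[OF a12(2)] a12(3) by simp
    finally have "pq v c a1 = pq v c a2" .
    moreover have "a1 \<in> {..<l}" "a2 \<in> {..<l}" using a12 unfolding Xv_def by auto
    ultimately show "a1 = a2" using injv inj_onD by metis
  qed
  moreover have "g ` Xv \<subseteq> T" using g by blast
  ultimately have "card Xv \<le> card T" using finT by (rule card_inj_on_le)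
  also have "card T = (\<Sum>u\<in>U. card {a'. a' < l \<and> x u a'})" unfolding T_def
    using finU by (rule card_SigmaI) simp
  also have "\<dots> = sum p U"
  proof (rule sum.cong)
    fix u assume "u \<in> U"
    then have "u < n" unfolding U_def tedge_def by simp
    then show "card {a'. a' < l \<and> x u a'} = p u" using pdef by simp
  qed simp
  finally show ?thesis using pdef vn unfolding Xv_def U_def by simp
qed



definition lastv :: "nat \<Rightarrow> (nat \<times> nat) list \<Rightarrow> nat" where
  "lastv r w = (if w = [] then r else fst (last w))"

definition Cs :: "nat \<Rightarrow> nat \<Rightarrow> (nat \<Rightarrow> nat \<Rightarrow> bool) \<Rightarrow> nat \<Rightarrow> (nat \<times> nat) list \<Rightarrow> nat set" where
  "Cs n m E r w = {c. tedge n m E (lastv r w) c \<and> (w \<noteq> [] \<longrightarrow> c \<noteq> snd (last w))}"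

definition Us :: "nat \<Rightarrow> nat \<Rightarrow> (nat \<Rightarrow> nat \<Rightarrow> bool) \<Rightarrow> nat \<Rightarrow> (nat \<times> nat) list \<Rightarrow> nat \<Rightarrow> nat set" where
  "Us n m E r w c = {u. tedge n m E u c \<and> u \<noteq> lastv r w}"

fun Wk :: "nat \<Rightarrow> nat \<Rightarrow> (nat \<Rightarrow> nat \<Rightarrow> bool) \<Rightarrow> nat \<Rightarrow> nat \<Rightarrow> (nat \<times> nat) list set" where
  "Wk n m E r 0 = {[]}"
| "Wk n m E r (Suc t) = (\<lambda>(w, c, u). w @ [(u, c)]) ` (SIGMA w:Wk n m E r t. SIGMA c:Cs n m E r w. Us n m E r w c)"

definition vx :: "nat \<Rightarrow> (nat \<times> nat) list \<Rightarrow> nat \<Rightarrow> nat + nat" where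
  "vx r w i = (if i = 0 then Inl r else if even i then Inl (fst (w ! (i div 2 - 1))) else Inr (snd (w ! (i div 2))))"

lemma finite_Cs: "finite (Cs n m E r w)"
  unfolding Cs_def tedge_def by (rule finite_subset[of _ "{..<m}"]) auto

lemma finite_Us: "finite (Us n m E r w c)"
  unfolding Us_def tedge_def by (rule finite_subset[of _ "{..<n}"]) auto

lemma finite_Wk: "finite (Wk n m E r t)"
  by (induction t) (auto simp: finite_Cs finite_Us)

lemma Wk_len: "w \<in> Wk n m E r t \<Longrightarrow> length w = t"
  by (induction t arbitrary: w) auto

lemma vx_append: "i \<le> 2 * length w \<Longrightarrow> vx r (w @ [y]) i = vx r w i"
proof -
  assume i: "i \<le> 2 * length w"
  show ?thesis
  proof (cases "i = 0")
    case True then show ?thesis by (simp add: vx_def)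
  next
    case False
    show ?thesis
    proof (cases "even i")
      case True
      then have "i div 2 - 1 < length w" using i False by auto
      then show ?thesis using True False by (simp add: vx_def nth_append)
    next
      case odd: False
      then have "i div 2 < length w" using i by presburger
      then show ?thesis using odd False by (simp add: vx_def nth_append)
    qed
  qed
qed

lemma vx_end: "vx r w (2 * length w) = Inl (lastv r w)"
proof (cases "w = []")
  case True then show ?thesis by (simp add: vx_def lastv_def)
next
  case False
  then have "length w > 0" by simp
  then show ?thesis using False by (simp add: vx_def lastv_def last_conv_nth)
qed

lemma vx_new1: "vx r (w @ [(u, c)]) (2 * length w + 1) = Inr c"
  by (simp add: vx_def)

lemma vx_new2: "vx r (w @ [(u, c)]) (2 * length w + 2) = Inl u"
  by (simp add: vx_def)

lemma vx_prev: "w \<noteq> [] \<Longrightarrow> vx r w (2 * length w - 1) = Inr (snd (last w))"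
proof -
  assume "w \<noteq> []"
  then obtain k where k: "length w = Suc k" by (cases w) auto
  have "2 * length w - 1 = 2 * k + 1" using k by simp
  then show ?thesis using k \<open>w \<noteq> []\<close> by (simp add: vx_def last_conv_nth)
qed

lemma vx_odd: "vx r w (2 * s + 1) = Inr (snd (w ! s))"
  by (simp add: vx_def)

lemma vx_even: "vx r w (2 * s + 2) = Inl (fst (w ! s))"
  by (simp add: vx_def)

lemma vx_0: "vx r w 0 = Inl r"
  by (simp add: vx_def)

lemma tadj_sym: "tadj n m E x y \<Longrightarrow> tadj n m E y x"
  by (cases x; cases y) auto

lemma tadj_irr: "\<not> tadj n m E x x"
  by (cases x) auto

lemma Wk_valid:
  "w \<in> Wk n m E r t \<Longrightarrow> (\<forall>i<2*t. tadj n m E (vx r w i) (vx r w (i+1))) \<and>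
     (\<forall>i. i + 2 \<le> 2*t \<longrightarrow> vx r w i \<noteq> vx r w (i+2))"
proof (induction t arbitrary: w)
  case 0
  then show ?case by simp
next
  case (Suc t)
  then obtain w0 c u where w: "w = w0 @ [(u, c)]" and w0: "w0 \<in> Wk n m E r t"
    and c: "c \<in> Cs n m E r w0" and u: "u \<in> Us n m E r w0 c" by auto
  have len: "length w0 = t" using w0 by (rule Wk_len)
  have IH: "\<forall>i<2*t. tadj n m E (vx r w0 i) (vx r w0 (i+1))"
     "\<forall>i. i + 2 \<le> 2*t \<longrightarrow> vx r w0 i \<noteq> vx r w0 (i+2)" using Suc.IH[OF w0] by auto
  have va: "\<And>i. i \<le> 2*t \<Longrightarrow> vx r w i = vx r w0 i" unfolding w using len by (simp add: vx_append)
  have e1: "vx r w (2*t+1) = Inr c" unfolding w using vx_new1[of r w0 u c] len by simp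
  have e2: "vx r w (2*t+2) = Inl u" unfolding w using vx_new2[of r w0 u c] len by simp
  have e0: "vx r w (2*t) = Inl (lastv r w0)" using va[of "2*t"] vx_end[of r w0] len by simp
  have tc: "tedge n m E (lastv r w0) c" and cne: "w0 \<noteq> [] \<longrightarrow> c \<noteq> snd (last w0)"
    using c unfolding Cs_def by auto
  have tu: "tedge n m E u c" and une: "u \<noteq> lastv r w0" using u unfolding Us_def by auto
  have A: "\<forall>i<2*Suc t. tadj n m E (vx r w i) (vx r w (i+1))"
  proof (intro allI impI)
    fix i assume i: "i < 2 * Suc t"
    have "i < 2*t \<or> i = 2*t \<or> i = 2*t+1" using i by (simp only: mult_Suc_right) linarith
    then consider "i < 2*t" | "i = 2*t" | "i = 2*t+1" by blast
    then show "tadj n m E (vx r w i) (vx r w (i+1))"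
    proof cases
      case 1 then show ?thesis using IH va by simp
    next
      case 2 then show ?thesis using e0 e1 tc by simp
    next
      case 3 then show ?thesis using e1 e2 tu by (simp add: add.assoc)
    qed
  qed
  have B: "\<forall>i. i + 2 \<le> 2*Suc t \<longrightarrow> vx r w i \<noteq> vx r w (i+2)"
  proof (intro allI impI)
    fix i assume i: "i + 2 \<le> 2 * Suc t"
    have "i + 2 \<le> 2*t \<or> i = 2*t \<or> i + 1 = 2*t" using i by (simp only: mult_Suc_right) linarith
    then consider "i + 2 \<le> 2*t" | "i = 2*t" | "i + 1 = 2*t" by blast
    then show "vx r w i \<noteq> vx r w (i+2)"
    proof cases
      case 1 then show ?thesis using IH va by simp
    next
      case 2 then show ?thesis using e0 e2 une by simp
    next
      case 3
      then have "t > 0" by simp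
      then have "w0 \<noteq> []" using len by auto
      have "i = 2 * length w0 - 1" using 3 len by simp
      then have "vx r w i = Inr (snd (last w0))" using va[of i] vx_prev[OF \<open>w0 \<noteq> []\<close>, of r] 3 by simp
      moreover have "i + 2 = 2*t+1" using 3 by simp
      ultimately show ?thesis using e1 cne \<open>w0 \<noteq> []\<close> by simp
    qed
  qed
  show ?case using A B by blast
qed

lemma lastv_lt: "r < n \<Longrightarrow> w \<in> Wk n m E r t \<Longrightarrow> lastv r w < n"
proof (induction t arbitrary: w)
  case 0 then show ?case by (simp add: lastv_def)
next
  case (Suc t)
  then obtain w0 c u where w: "w = w0 @ [(u, c)]" and u: "u \<in> Us n m E r w0 c" by auto
  then show ?case unfolding lastv_def Us_def tedge_def by simp
qed



lemma card_Cs: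
  assumes deg: "var_deg n m E (lastv r w) \<ge> d"
  shows "card (Cs n m E r w) \<ge> d - 1"
proof -
  define A where "A = {c. tedge n m E (lastv r w) c}"
  have finA: "finite A" unfolding A_def tedge_def by (rule finite_subset[of _ "{..<m}"]) auto
  have "A - {snd (last w)} \<subseteq> Cs n m E r w" unfolding A_def Cs_def by auto
  then have "card (A - {snd (last w)}) \<le> card (Cs n m E r w)" by (intro card_mono finite_Cs)
  moreover have "card A - card {snd (last w)} \<le> card (A - {snd (last w)})"
    by (rule diff_card_le_card_Diff) simp
  moreover have "card A \<ge> d" using deg unfolding A_def var_deg_def by simp
  ultimately show ?thesis by simp
qed

lemma sum_Suc:
  "(\<Sum>w\<in>Wk n m E r (Suc t). f (lastv r w)) =
   (\<Sum>w\<in>Wk n m E r t. \<Sum>c\<in>Cs n m E r w. \<Sum>u\<in>Us n m E r w c. f u)"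
proof -
  let ?h = "(\<lambda>(w, c, u). w @ [(u, c)])"
  let ?S = "(SIGMA w:Wk n m E r t. SIGMA c:Cs n m E r w. Us n m E r w c)"
  have inj: "inj_on ?h ?S" by (rule inj_onI) auto
  have "(\<Sum>w\<in>Wk n m E r (Suc t). f (lastv r w)) = (\<Sum>z\<in>?S. f (lastv r (?h z)))"
    using sum.reindex[OF inj, of "\<lambda>w. f (lastv r w)"] by (simp add: comp_def)
  also have "\<dots> = (\<Sum>z\<in>?S. (\<lambda>(w, c, u). f u) z)"
    by (rule sum.cong) (auto simp: lastv_def)
  also have "\<dots> = (\<Sum>w\<in>Wk n m E r t. \<Sum>z\<in>(SIGMA c:Cs n m E r w. Us n m E r w c). (\<lambda>(c, u). f u) z)"
    by (subst sum.Sigma[symmetric]) (auto simp: finite_Wk finite_Cs finite_Us intro!: finite_SigmaI)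
  also have "\<dots> = (\<Sum>w\<in>Wk n m E r t. \<Sum>c\<in>Cs n m E r w. \<Sum>u\<in>Us n m E r w c. f u)"
    by (rule sum.cong[OF refl], subst sum.Sigma[symmetric]) (auto simp: finite_Cs finite_Us)
  finally show ?thesis .
qed

lemma lower:
  assumes loc: "\<forall>v c. tedge n m E v c \<longrightarrow> p v \<le> sum p {u. tedge n m E u c \<and> u \<noteq> v}"
    and deg: "\<forall>v<n. var_deg n m E v \<ge> d" and r: "r < n"
  shows "(d - 1) ^ t * p r \<le> (\<Sum>w\<in>Wk n m E r t. p (lastv r w))"
proof (induction t)
  case 0
  then show ?case by (simp add: lastv_def)
next
  case (Suc t)
  have "(\<Sum>w\<in>Wk n m E r t. (d - 1) * p (lastv r w)) \<le>
        (\<Sum>w\<in>Wk n m E r t. \<Sum>c\<in>Cs n m E r w. \<Sum>u\<in>Us n m E r w c. p u)"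
  proof (rule sum_mono)
    fix w assume w: "w \<in> Wk n m E r t"
    have "(d - 1) * p (lastv r w) \<le> card (Cs n m E r w) * p (lastv r w)"
      using card_Cs[where d=d and n=n and m=m and E=E and r=r and w=w] deg lastv_lt[OF r w] by simp
    also have "\<dots> = (\<Sum>c\<in>Cs n m E r w. p (lastv r w))" by simp
    also have "\<dots> \<le> (\<Sum>c\<in>Cs n m E r w. \<Sum>u\<in>Us n m E r w c. p u)"
    proof (rule sum_mono)
      fix c assume "c \<in> Cs n m E r w"
      then have "tedge n m E (lastv r w) c" unfolding Cs_def by simp
      then show "p (lastv r w) \<le> (\<Sum>u\<in>Us n m E r w c. p u)" using loc unfolding Us_def by simp
    qed
    finally show "(d - 1) * p (lastv r w) \<le> (\<Sum>c\<in>Cs n m E r w. \<Sum>u\<in>Us n m E r w c. p u)" .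
  qed
  note X = this
  have "(d - 1) ^ Suc t * p r = (d - 1) * ((d - 1) ^ t * p r)" by simp
  also have "\<dots> \<le> (d - 1) * (\<Sum>w\<in>Wk n m E r t. p (lastv r w))"
    using Suc.IH by (rule mult_left_mono) simp
  also have "\<dots> = (\<Sum>w\<in>Wk n m E r t. (d - 1) * p (lastv r w))"
    by (simp add: sum_distrib_left)
  also note X
  also have "(\<Sum>w\<in>Wk n m E r t. \<Sum>c\<in>Cs n m E r w. \<Sum>u\<in>Us n m E r w c. p u) = (\<Sum>w\<in>Wk n m E r (Suc t). p (lastv r w))"
    by (rule sum_Suc[symmetric])
  finally show ?case .
qed

lemma inj_lastv:
  assumes nocyc: "\<forall>vs. is_cycle n m E vs \<longrightarrow> length vs > 4*k"
  shows "inj_on (lastv r) (Wk n m E r k)"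
proof (rule inj_onI)
  fix w1 w2 assume w1: "w1 \<in> Wk n m E r k" and w2: "w2 \<in> Wk n m E r k"
    and eq: "lastv r w1 = lastv r w2"
  show "w1 = w2"
  proof (rule ccontr)
    assume ne: "w1 \<noteq> w2"
    have l1: "length w1 = k" and l2: "length w2 = k" using w1 w2 by (auto intro: Wk_len)
    obtain s where s: "s < k" "w1 ! s \<noteq> w2 ! s"
      using ne l1 l2 nth_equalityI by metis
    have "\<exists>i\<le>2*k. vx r w1 i \<noteq> vx r w2 i"
    proof (cases "fst (w1 ! s) = fst (w2 ! s)")
      case True
      then have "snd (w1 ! s) \<noteq> snd (w2 ! s)" using s by (metis prod.expand)
      then have "vx r w1 (2*s+1) \<noteq> vx r w2 (2*s+1)" using vx_odd[of r w1 s] vx_odd[of r w2 s] by simp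
      then show ?thesis using s by (intro exI[of _ "2*s+1"]) auto
    next
      case False
      then have "vx r w1 (2*s+2) \<noteq> vx r w2 (2*s+2)" using vx_even[of r w1 s] vx_even[of r w2 s] by simp
      then show ?thesis using s by (intro exI[of _ "2*s+2"]) auto
    qed
    then obtain i where i: "i \<le> 2*k" "vx r w1 i \<noteq> vx r w2 i" by blast
    have v1: "\<forall>i<2*k. tadj n m E (vx r w1 i) (vx r w1 (i+1))"
       "\<forall>i. i + 2 \<le> 2*k \<longrightarrow> vx r w1 i \<noteq> vx r w1 (i+2)" using Wk_valid[OF w1] by auto
    have v2: "\<forall>i<2*k. tadj n m E (vx r w2 i) (vx r w2 (i+1))"
       "\<forall>i. i + 2 \<le> 2*k \<longrightarrow> vx r w2 i \<noteq> vx r w2 (i+2)" using Wk_valid[OF w2] by auto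
    have a0: "vx r w1 0 = vx r w2 0" by (simp add: vx_0)
    have aL: "vx r w1 (2*k) = vx r w2 (2*k)" using vx_end[of r w1] vx_end[of r w2] l1 l2 eq by simp
    have sym: "\<forall>x y. tadj n m E x y \<longrightarrow> tadj n m E y x" using tadj_sym by blast
    have irr: "\<forall>x. \<not> tadj n m E x x" using tadj_irr by blast
    obtain vs where vs: "length vs \<ge> 3" "distinct vs"
      "\<forall>q<length vs. tadj n m E (vs!q) (vs!((q+1) mod length vs))" "length vs \<le> 2*(2*k)"
      using two_walks[where R="tadj n m E" and a="vx r w1" and b="vx r w2" and L="2*k",
          OF sym irr a0 aL i v1(1) v2(1) v1(2) v2(2)] by blast
    have "is_cycle n m E vs" unfolding is_cycle_def using vs by blast
    then show False using nocyc vs(4) by fastforce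
  qed
qed



theorem corollary1:
  fixes n m :: nat and E :: "nat \<Rightarrow> nat \<Rightarrow> bool"
  assumes "0 < n" and "0 < m"
    and "min_left_deg n m E \<ge> 3"
    and "min_right_deg n m E \<ge> 2"
    and "girth n m E > 4"
  shows "\<forall>p. lift_pcw n m E p \<and> nonzero_pcw n p \<longrightarrow>
           real (w_bsc n p) \<ge> real ((min_left_deg n m E - 1) ^ (nat \<lceil>real (girth n m E) / 4\<rceil> - 1))
         \<and> w_awgn n p \<ge> real ((min_left_deg n m E - 1) ^ (nat \<lceil>real (girth n m E) / 4\<rceil> - 1))"
proof (intro allI impI)
  fix p assume hp: "lift_pcw n m E p \<and> nonzero_pcw n p"
  define d where "d = min_left_deg n m E"
  define g where "g = girth n m E"
  define k where "k = nat \<lceil>real g / 4\<rceil> - 1"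
  define B where "B = (d - 1) ^ k"
  have loc: "\<forall>v c. tedge n m E v c \<longrightarrow> p v \<le> sum p {u. tedge n m E u c \<and> u \<noteq> v}"
    using local_ineq hp by blast
  have deg: "\<forall>v<n. var_deg n m E v \<ge> d"
    unfolding d_def min_left_deg_def by (auto intro: Min_le)
  have g4: "real g > 4" using assms(5) unfolding g_def by simp
  have kg: "4 * k < g"
  proof -
    have c: "real_of_int \<lceil>real g / 4\<rceil> - 1 < real g / 4" using ceiling_correct by blast
    have c1: "\<lceil>real g / 4\<rceil> \<ge> 1" using g4 by simp
    have "int k = \<lceil>real g / 4\<rceil> - 1" unfolding k_def using c1 by linarith
    then have "real k = real_of_int (\<lceil>real g / 4\<rceil> - 1)" by (metis of_int_of_nat_eq)
    then have "real k = real_of_int \<lceil>real g / 4\<rceil> - 1" by simp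
    then have "real (4 * k) < real g" using c by simp
    then show ?thesis by linarith
  qed
  have nocyc: "\<forall>vs. is_cycle n m E vs \<longrightarrow> length vs > 4*k"
  proof (intro allI impI)
    fix vs assume "is_cycle n m E vs"
    then have "g \<le> length vs" unfolding g_def girth_def
      by (intro cInf_lower) auto
    then show "length vs > 4*k" using kg by simp
  qed
  obtain r where r: "r < n" "\<forall>i<n. p i \<le> p r"
  proof -
    have fin: "finite (p ` {..<n})" and ne: "p ` {..<n} \<noteq> {}" using assms(1) by auto
    obtain r where "r < n" "p r = Max (p ` {..<n})" using Max_in[OF fin ne] by auto
    moreover have "\<forall>i<n. p i \<le> Max (p ` {..<n})" using fin by auto
    ultimately show ?thesis using that by auto
  qed
  obtain i0 where i0: "i0 < n" "p i0 \<noteq> 0" using hp unfolding nonzero_pcw_def by blast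
  have pr: "p r > 0" using r i0 by (metis gr0I le_0_eq)
  define S where "S = (\<Sum>i<n. p i)"
  define Q where "Q = (\<Sum>i<n. (p i)\<^sup>2)"
  have BS: "B * p r \<le> S"
  proof -
    have "B * p r \<le> (\<Sum>w\<in>Wk n m E r k. p (lastv r w))"
      unfolding B_def by (rule lower[OF loc deg r(1)])
    also have "\<dots> = sum p (lastv r ` Wk n m E r k)"
      using sum.reindex[OF inj_lastv[OF nocyc], of p r] by (simp add: comp_def)
    also have "\<dots> \<le> S" unfolding S_def
      by (rule sum_mono2) (auto intro: lastv_lt[OF r(1)])
    finally show ?thesis .
  qed
  define T where "T = (\<lambda>e. {sum p A | A. A \<subseteq> {..<n} \<and> card A = e})"
  have finT: "finite (T e)" for e
  proof -
    have "T e = sum p ` {A. A \<subseteq> {..<n} \<and> card A = e}" unfolding T_def by auto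
    moreover have "finite {A. A \<subseteq> {..<n} \<and> card A = e}"
      by (rule finite_subset[of _ "Pow {..<n}"]) auto
    ultimately show ?thesis by simp
  qed
  have topT: "top_sum n p e = Max (T e)" for e unfolding top_sum_def T_def by simp
  have top_le: "top_sum n p e \<le> e * p r" if "e \<le> n" for e
  proof -
    have "{..<e} \<subseteq> {..<n} \<and> card {..<e} = e" using that by auto
    then have ne: "T e \<noteq> {}" unfolding T_def by blast
    have "\<forall>x\<in>T e. x \<le> e * p r"
    proof
      fix x assume "x \<in> T e"
      then obtain A where A: "A \<subseteq> {..<n}" "card A = e" "x = sum p A" unfolding T_def by blast
      have "sum p A \<le> card A * p r" using sum_bounded_above[of A p "p r"] A r by auto
      then show "x \<le> e * p r" using A by simp
    qed
    then show ?thesis unfolding topT using finT ne by simp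
  qed
  have top_n: "top_sum n p n \<ge> S"
  proof -
    have "S \<in> T n" unfolding T_def S_def by auto
    then show ?thesis unfolding topT using finT by simp
  qed
  define e where "e = bsc_e n p"
  have he: "e \<le> n \<and> 2 * top_sum n p e \<ge> S" unfolding e_def bsc_e_def S_def[symmetric]
    by (rule LeastI[of _ n]) (use top_n in simp)
  have te: "top_sum n p e \<le> e * p r" using he top_le by simp
  have bsc: "w_bsc n p \<ge> B"
  proof (cases "2 * top_sum n p e = S")
    case True
    then have "w_bsc n p = 2 * e" unfolding w_bsc_def e_def[symmetric] S_def[symmetric] Let_def by simp
    moreover have h: "B * p r \<le> (2 * e) * p r"
    proof -
      have "(2*e) * p r = 2 * (e * p r)" by simp
      then show ?thesis using BS True te by linarith
    qed
    ultimately show ?thesis using mult_right_le_imp_le[OF h pr] by simp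
  next
    case False
    then have "w_bsc n p = 2 * e - 1" unfolding w_bsc_def e_def[symmetric] S_def[symmetric] Let_def by simp
    moreover have h: "B * p r < (2 * e) * p r"
    proof -
      have "(2*e) * p r = 2 * (e * p r)" by simp
      then show ?thesis using BS False te he by linarith
    qed
    moreover have "B < 2*e" using h by simp
    ultimately show ?thesis by linarith
  qed
  have QS: "Q \<le> p r * S" unfolding Q_def S_def sum_distrib_left
    by (rule sum_mono) (use r in \<open>simp add: power2_eq_square\<close>)
  have Qpos: "Q > 0"
  proof -
    have "(p i0)\<^sup>2 \<le> Q" unfolding Q_def using i0 by (intro member_le_sum) auto
    moreover have "(p i0)\<^sup>2 > 0" using i0 by simp
    ultimately show ?thesis by linarith
  qed
  have "B * Q \<le> S * S"
  proof -
    have "B * Q \<le> B * (p r * S)" using QS by simp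
    also have "\<dots> = (B * p r) * S" by simp
    also have "\<dots> \<le> S * S" using BS by simp
    finally show ?thesis .
  qed
  then have "real B * real Q \<le> (real S)\<^sup>2" by (simp add: power2_eq_square flip: of_nat_mult)
  then have awgn: "w_awgn n p \<ge> real B" unfolding w_awgn_def S_def[symmetric]
    using Qpos by (simp add: Q_def[symmetric] pos_le_divide_eq)
  show "real (w_bsc n p) \<ge> real ((min_left_deg n m E - 1) ^ (nat \<lceil>real (girth n m E) / 4\<rceil> - 1))
         \<and> w_awgn n p \<ge> real ((min_left_deg n m E - 1) ^ (nat \<lceil>real (girth n m E) / 4\<rceil> - 1))"
    using bsc awgn unfolding B_def d_def k_def g_def by simp
qed

end
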